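(* Let $n\ge 3$. For any tuple of integers $m=(m_1,\dots,m_{n-1})$ and any word $w(A,B)\in\mathbb F_2=\langle A,B\rangle$, the kernel $\operatorname{Ker}(\Theta_n^{w,m})$ contains a subgroup isomorphic to the free group of rank $2$.
   Context: For $n\ge 2$, the flat virtual braid group $FVB_n$ is the group with generators $\sigma_1,\dots,\sigma_{n-1},\rho_1,\dots,\rho_{n-1}$ and defining relations: $\sigma_i^2=1$, $\rho_i^2=1$ for $1\le i\le n-1$; $\sigma_i\sigma_{i+1}\sigma_i=\sigma_{i+1}\sigma_i\sigma_{i+1}$, $\rho_i\rho_{i+1}\rho_i=\rho_{i+1}\rho_i\rho_{i+1}$ and $\rho_i\rho_{i+1}\sigma_i=\sigma_{i+1}\rho_i\rho_{i+1}$ for $1\le i\le n-2$; $\sigma_i\sigma_j=\sigma_j\sigma_i$, $\rho_i\rho_j=\rho_j\rho_i$ and $\rho_i\sigma_j=\sigma_j\rho_i$ for $|i-j|\ge 2$. $\mathbb F_{2n}$ is the free group on $x_1,\dots,x_n,y_1,\dots,y_n$; automorphisms compose left to right, $(\varphi\psi)(f)=\psi(\varphi(f))$; generators not mentioned are fixed. For $w(A,B)\in\mathbb F_2$ and $m\in\mathbb Z^{n-1}$, $\Theta_n^{w,m}\colon FVB_n\to\mathrm{Aut}(\mathbb F_{2n})$ is the homomorphism given by $\Theta_n^{w,m}(\sigma_i): x_i\mapsto x_{i+1}a_i,\ x_{i+1}\mapsto x_i a_i^{-1}$, where $a_i=y_{i+1}^{m_2+\dots+m_i}\,w(y_i,y_{i+1})\,y_i^{-(m_1+\dots+m_{i-1})}$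 (empty sums are $0$, so $a_1=w(y_1,y_2)$); $\Theta_n^{w,m}(\rho_i): x_i\mapsto x_{i+1}y_{i+1}^{m_i},\ x_{i+1}\mapsto x_iy_i^{-m_i},\ y_i\mapsto y_{i+1},\ y_{i+1}\mapsto y_i$. *)

theory Defs
  imports Main
begin

text \<open>A word over an alphabet 'g is a list of letters (x, e) with e = False meaning x
  and e = True meaning x^-1.\<close>

type_synonym 'g word = "('g \<times> bool) list"

definition inv_word :: "'g word \<Rightarrow> 'g word" where
  "inv_word w = rev (map (\<lambda>(x, e). (x, \<not> e)) w)"

inductive free_step :: "'g word \<Rightarrow> 'g word \<Rightarrow> bool" where
  "free_step (u @ [(x, e), (x, \<not> e)] @ v) (u @ v)"

definition free_eq :: "'g word \<Rightarrow> 'g word \<Rightarrow> bool" where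
  "free_eq = equivclp free_step"

inductive pres_step :: "'g word set \<Rightarrow> 'g word \<Rightarrow> 'g word \<Rightarrow> bool" for R where
  "pres_step R (u @ [(x, e), (x, \<not> e)] @ v) (u @ v)"
| "r \<in> R \<Longrightarrow> pres_step R (u @ r @ v) (u @ v)"

definition pres_eq :: "'g word set \<Rightarrow> 'g word \<Rightarrow> 'g word \<Rightarrow> bool" where
  "pres_eq R = equivclp (pres_step R)"

definition subst_word :: "('g \<Rightarrow> 'h word) \<Rightarrow> 'g word \<Rightarrow> 'h word" where
  "subst_word f w = concat (map (\<lambda>(x, e). if e then inv_word (f x) else f x) w)"

datatype fvb_gen = Sig nat | Rho nat

definition gw :: "fvb_gen \<Rightarrow> fvb_gen word" where
  "gw g = [(g, False)]"

definition commutator_rel :: "fvb_gen \<Rightarrow> fvb_gen \<Rightarrow> fvb_gen word" where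
  "commutator_rel a b = gw a @ gw b @ inv_word (gw b @ gw a)"

definition fvb_rels :: "nat \<Rightarrow> fvb_gen word set" where
  "fvb_rels n =
     {gw (Sig i) @ gw (Sig i) | i. 1 \<le> i \<and> i \<le> n - 1}
   \<union> {gw (Rho i) @ gw (Rho i) | i. 1 \<le> i \<and> i \<le> n - 1}
   \<union> {gw (Sig i) @ gw (Sig (i+1)) @ gw (Sig i) @
        inv_word (gw (Sig (i+1)) @ gw (Sig i) @ gw (Sig (i+1))) | i. 1 \<le> i \<and> i \<le> n - 2}
   \<union> {gw (Rho i) @ gw (Rho (i+1)) @ gw (Rho i) @
        inv_word (gw (Rho (i+1)) @ gw (Rho i) @ gw (Rho (i+1))) | i. 1 \<le> i \<and> i \<le> n - 2}
   \<union> {gw (Rho i) @ gw (Rho (i+1)) @ gw (Sig i) @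
        inv_word (gw (Sig (i+1)) @ gw (Rho i) @ gw (Rho (i+1))) | i. 1 \<le> i \<and> i \<le> n - 2}
   \<union> {commutator_rel (Sig i) (Sig j) | i j. 1 \<le> i \<and> i \<le> n - 1 \<and> 1 \<le> j \<and> j \<le> n - 1
        \<and> (i + 2 \<le> j \<or> j + 2 \<le> i)}
   \<union> {commutator_rel (Rho i) (Rho j) | i j. 1 \<le> i \<and> i \<le> n - 1 \<and> 1 \<le> j \<and> j \<le> n - 1
        \<and> (i + 2 \<le> j \<or> j + 2 \<le> i)}
   \<union> {commutator_rel (Rho i) (Sig j) | i j. 1 \<le> i \<and> i \<le> n - 1 \<and> 1 \<le> j \<and> j \<le> n - 1
        \<and> (i + 2 \<le> j \<or> j + 2 \<le> i)}"

definition fvb_idx :: "fvb_gen \<Rightarrow> nat" where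
  "fvb_idx g = (case g of Sig i \<Rightarrow> i | Rho i \<Rightarrow> i)"

definition fvb_word :: "nat \<Rightarrow> fvb_gen word \<Rightarrow> bool" where
  "fvb_word n u \<longleftrightarrow> (\<forall>(g, e) \<in> set u. 1 \<le> fvb_idx g \<and> fvb_idx g \<le> n - 1)"

definition fvb_eq :: "nat \<Rightarrow> fvb_gen word \<Rightarrow> fvb_gen word \<Rightarrow> bool" where
  "fvb_eq n = pres_eq (fvb_rels n)"

datatype f2_gen = GA | GB

datatype fgen = X nat | Y nat

definition gpow :: "'g \<Rightarrow> int \<Rightarrow> 'g word" where
  "gpow z k = (if 0 \<le> k then replicate (nat k) (z, False) else replicate (nat (- k)) (z, True))"

definition w_eval :: "f2_gen word \<Rightarrow> nat \<Rightarrow> fgen word" where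
  "w_eval w i = subst_word (\<lambda>g. case g of GA \<Rightarrow> [(Y i, False)] | GB \<Rightarrow> [(Y (i+1), False)]) w"

definition a_word :: "f2_gen word \<Rightarrow> (nat \<Rightarrow> int) \<Rightarrow> nat \<Rightarrow> fgen word" where
  "a_word w m i = gpow (Y (i+1)) (\<Sum>j\<in>{2..i}. m j) @ w_eval w i @ gpow (Y i) (- (\<Sum>j\<in>{1..<i}. m j))"

definition theta_gen :: "f2_gen word \<Rightarrow> (nat \<Rightarrow> int) \<Rightarrow> fvb_gen \<Rightarrow> fgen \<Rightarrow> fgen word" where
  "theta_gen w m g z =
     (case g of
        Sig i \<Rightarrow>
          (if z = X i then [(X (i+1), False)] @ a_word w m i
           else if z = X (i+1) then [(X i, False)] @ inv_word (a_word w m i)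
           else [(z, False)])
      | Rho i \<Rightarrow>
          (if z = X i then [(X (i+1), False)] @ gpow (Y (i+1)) (m i)
           else if z = X (i+1) then [(X i, False)] @ gpow (Y i) (- m i)
           else if z = Y i then [(Y (i+1), False)]
           else if z = Y (i+1) then [(Y i, False)]
           else [(z, False)]))"

text \<open>Each Theta(sigma_i), Theta(rho_i) is an involution, so Theta(g^-1) = Theta(g);
  hence the inverse flag of a letter is irrelevant.  Automorphisms compose left to right:
  Theta(g_1 ... g_k)(f) = Theta(g_k)(... Theta(g_1)(f)).\<close>
fun theta_apply :: "f2_gen word \<Rightarrow> (nat \<Rightarrow> int) \<Rightarrow> fvb_gen word \<Rightarrow> fgen word \<Rightarrow> fgen word" where
  "theta_apply w m [] f = f"
| "theta_apply w m ((g, e) # u) f = theta_apply w m u (subst_word (theta_gen w m g) f)"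

definition in_theta_kernel :: "nat \<Rightarrow> f2_gen word \<Rightarrow> (nat \<Rightarrow> int) \<Rightarrow> fvb_gen word \<Rightarrow> bool" where
  "in_theta_kernel n w m u \<longleftrightarrow>
     (\<forall>j. 1 \<le> j \<and> j \<le> n \<longrightarrow>
        free_eq (theta_apply w m u [(X j, False)]) [(X j, False)] \<and>
        free_eq (theta_apply w m u [(Y j, False)]) [(Y j, False)])"

text \<open>Ker(Theta) contains a subgroup isomorphic to F_2: there are kernel elements u, v
  such that the homomorphism F_2 \<rightarrow> FVB_n, A \<mapsto> u, B \<mapsto> v, is injective
  (its image is then a subgroup of the kernel isomorphic to F_2).\<close>
definition kernel_contains_F2 :: "nat \<Rightarrow> f2_gen word \<Rightarrow> (nat \<Rightarrow> int) \<Rightarrow> bool" where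
  "kernel_contains_F2 n w m \<longleftrightarrow>
     (\<exists>u v. fvb_word n u \<and> fvb_word n v \<and>
        in_theta_kernel n w m u \<and> in_theta_kernel n w m v \<and>
        (\<forall>r :: f2_gen word. \<not> free_eq r [] \<longrightarrow>
           \<not> fvb_eq n (subst_word (\<lambda>g. case g of GA \<Rightarrow> u | GB \<Rightarrow> v) r) []))"

end

theory Submission
  imports Defs
begin


section \<open>Free group basics\<close>

definition inv1 :: "'g \<times> bool \<Rightarrow> 'g \<times> bool" where
  "inv1 a = (fst a, \<not> snd a)"

lemma inv1_inv1[simp]: "inv1 (inv1 a) = a" by (simp add: inv1_def)
lemma inv1_neq[simp]: "inv1 a \<noteq> a" "a \<noteq> inv1 a" by (cases a, simp add: inv1_def)+

lemma inv_word_Nil[simp]: "inv_word [] = []" by (simp add: inv_word_def)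
lemma inv_word_Cons[simp]: "inv_word (a # w) = inv_word w @ [inv1 a]"
  by (cases a) (simp add: inv_word_def inv1_def)
lemma inv_word_append[simp]: "inv_word (a @ b) = inv_word b @ inv_word a"
  by (simp add: inv_word_def)
lemma inv_word_inv_word[simp]: "inv_word (inv_word a) = a"
  by (induction a) auto
lemma inv_word_eq_Nil[simp]: "inv_word a = [] \<longleftrightarrow> a = []"
  by (simp add: inv_word_def)

lemma equivclp_map:
  assumes "\<And>a b. r a b \<Longrightarrow> equivclp s (f a) (f b)" and "equivclp r a b"
  shows "equivclp s (f a) (f b)"
  using assms(2)
proof (induction rule: equivclp_induct)
  case base then show ?case by simp
next
  case (step y z)
  then show ?case using assms(1) by (meson equivclp_sym equivclp_trans)
qed

lemma free_step_pair: "free_step (u @ [a, inv1 a] @ v) (u @ v)"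
  using free_step.intros[of u "fst a" "snd a" v] by (simp add: inv1_def)

lemma free_eq_refl[simp]: "free_eq a a" by (simp add: free_eq_def)
lemma free_eq_sym: "free_eq a b \<Longrightarrow> free_eq b a" by (simp add: free_eq_def equivclp_sym)
lemma free_eq_trans[trans]: "free_eq a b \<Longrightarrow> free_eq b c \<Longrightarrow> free_eq a c"
  unfolding free_eq_def by (rule equivclp_trans)

lemma free_step_cong: "free_step a b \<Longrightarrow> free_step (p @ a @ q) (p @ b @ q)"
proof (induction rule: free_step.induct)
  case (1 u x e v)
  have "free_step ((p @ u) @ [(x, e), (x, \<not> e)] @ (v @ q)) ((p @ u) @ (v @ q))"
    by (rule free_step.intros)
  then show ?case by simp
qed

lemma free_eq_cong: "free_eq a b \<Longrightarrow> free_eq (p @ a @ q) (p @ b @ q)"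
  unfolding free_eq_def
  by (rule equivclp_map[where f="\<lambda>x. p @ x @ q"]) (auto intro: free_step_cong)

lemma free_eq_app: "free_eq a a' \<Longrightarrow> free_eq b b' \<Longrightarrow> free_eq (a @ b) (a' @ b')"
proof -
  assume 1: "free_eq a a'" and 2: "free_eq b b'"
  have "free_eq ([] @ a @ b) ([] @ a' @ b)" by (rule free_eq_cong[OF 1])
  moreover have "free_eq (a' @ b @ []) (a' @ b' @ [])" by (rule free_eq_cong[OF 2])
  ultimately show ?thesis by (simp add: free_eq_trans)
qed

lemma free_eq_Cons: "free_eq b b' \<Longrightarrow> free_eq (x # b) (x # b')"
  using free_eq_app[of "[x]" "[x]" b b'] by simp

lemma free_eq_cancel: "free_eq (u @ [a, inv1 a] @ v) (u @ v)"
  unfolding free_eq_def by (rule r_into_equivclp) (rule free_step_pair)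

lemma free_eq_inv_right: "free_eq (v @ inv_word v) []"
proof (induction v)
  case Nil then show ?case by simp
next
  case (Cons a v)
  have "free_eq ([a] @ (v @ inv_word v) @ [inv1 a]) ([a] @ [] @ [inv1 a])"
    by (rule free_eq_cong[OF Cons])
  moreover have "free_eq ([] @ [a, inv1 a] @ []) ([] @ [])" by (rule free_eq_cancel)
  ultimately show ?case by (auto intro: free_eq_trans)
qed

lemma free_eq_inv_left: "free_eq (inv_word v @ v) []"
  using free_eq_inv_right[of "inv_word v"] by simp

lemma free_step_inv: "free_step a b \<Longrightarrow> free_step (inv_word a) (inv_word b)"
proof (induction rule: free_step.induct)
  case (1 u x e v)
  have "free_step (inv_word v @ [(x, e), (x, \<not> e)] @ inv_word u) (inv_word v @ inv_word u)"
    by (rule free_step.intros)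
  then show ?case by (simp add: inv1_def)
qed

lemma free_eq_inv: "free_eq a b \<Longrightarrow> free_eq (inv_word a) (inv_word b)"
  unfolding free_eq_def
  by (rule equivclp_map[where f=inv_word]) (auto intro: free_step_inv)

lemma free_eq_Nil_app: "free_eq a [] \<Longrightarrow> free_eq (a @ b) b"
  using free_eq_app[of a "[]" b b] by simp
lemma free_eq_app_Nil: "free_eq b [] \<Longrightarrow> free_eq (a @ b) a"
  using free_eq_app[of a a b "[]"] by simp

lemma free_eq_move: "free_eq (p @ c) q \<Longrightarrow> free_eq p (q @ inv_word c)"
proof -
  assume h: "free_eq (p @ c) q"
  have "free_eq p (p @ (c @ inv_word c))" using free_eq_app_Nil[OF free_eq_inv_right, of p c]
    by (simp add: free_eq_sym)
  also have "free_eq (p @ (c @ inv_word c)) ((p @ c) @ inv_word c)" by simp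
  also have "free_eq ((p @ c) @ inv_word c) (q @ inv_word c)" by (rule free_eq_app[OF h free_eq_refl])
  finally show ?thesis .
qed

lemma free_eq_Cons_cancel: "free_eq (x # a) (x # b) \<Longrightarrow> free_eq a b"
proof -
  assume h: "free_eq (x # a) (x # b)"
  have "free_eq ([inv1 x] @ (x # a)) ([inv1 x] @ (x # b))" using free_eq_app[OF free_eq_refl h] .
  moreover have "free_eq ([] @ [inv1 x, x] @ a) a" using free_eq_cancel[of "[]" "inv1 x" a] by simp
  moreover have "free_eq ([] @ [inv1 x, x] @ b) b" using free_eq_cancel[of "[]" "inv1 x" b] by simp
  ultimately show ?thesis by (auto intro: free_eq_trans free_eq_sym)
qed

section \<open>Reduction\<close>

definition lmul :: "'g \<times> bool \<Rightarrow> ('g \<times> bool) list \<Rightarrow> ('g \<times> bool) list" where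
  "lmul a z = (case z of [] \<Rightarrow> [a] | b # z' \<Rightarrow> if b = inv1 a then z' else a # z)"

definition red :: "('g \<times> bool) list \<Rightarrow> ('g \<times> bool) list" where
  "red w = foldr lmul w []"

fun reduced :: "('g \<times> bool) list \<Rightarrow> bool" where
  "reduced (a # b # w) = (b \<noteq> inv1 a \<and> reduced (b # w))"
| "reduced _ = True"

lemma reduced_tl: "reduced (a # w) \<Longrightarrow> reduced w"
  by (cases w) auto

lemma reduced_lmul: "reduced z \<Longrightarrow> reduced (lmul a z)"
  by (cases z) (auto simp: lmul_def dest: reduced_tl)

lemma lmul_inv: "reduced z \<Longrightarrow> lmul (inv1 a) (lmul a z) = z"
proof (cases z)
  case Nil then show ?thesis by (simp add: lmul_def)
next
  case (Cons b z')
  assume r: "reduced z"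
  show ?thesis
  proof (cases "b = inv1 a")
    case True
    then show ?thesis using r Cons by (cases z') (auto simp: lmul_def)
  next
    case False
    then show ?thesis using Cons by (simp add: lmul_def)
  qed
qed

lemma red_Nil[simp]: "red [] = []" by (simp add: red_def)
lemma red_Cons: "red (a # w) = lmul a (red w)" by (simp add: red_def)
lemma red_append: "red (u @ v) = foldr lmul u (red v)" by (simp add: red_def)

lemma reduced_red: "reduced (red w)"
  by (induction w) (auto simp: red_Cons intro: reduced_lmul)

lemma red_reduced: "reduced w \<Longrightarrow> red w = w"
proof (induction w)
  case Nil then show ?case by simp
next
  case (Cons a w)
  then have "red w = w" by (auto dest: reduced_tl)
  then show ?case using Cons.prems by (cases w) (auto simp: red_Cons lmul_def)
qed

lemma free_step_red: "free_step a b \<Longrightarrow> red a = red b"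
proof (induction rule: free_step.induct)
  case (1 u x e v)
  have "lmul (x, e) (lmul (x, \<not> e) (red v)) = red v"
    using lmul_inv[OF reduced_red, of "(x, \<not> e)" v] by (simp add: inv1_def)
  then show ?case by (simp add: red_append red_Cons)
qed

lemma free_eq_red: "free_eq a b \<Longrightarrow> red a = red b"
  unfolding free_eq_def
  by (induction rule: equivclp_induct) (auto dest: free_step_red)

lemma free_eq_lmul: "free_eq (a # z) (lmul a z)"
proof (cases z)
  case Nil then show ?thesis by (simp add: lmul_def)
next
  case (Cons b z')
  then show ?thesis
    using free_eq_cancel[of "[]" a z'] by (auto simp: lmul_def)
qed

lemma free_eq_to_red: "free_eq w (red w)"
proof (induction w)
  case Nil then show ?case by simp
next
  case (Cons a w)
  have "free_eq (a # w) (a # red w)" by (rule free_eq_Cons[OF Cons])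
  also have "free_eq (a # red w) (lmul a (red w))" by (rule free_eq_lmul)
  finally show ?case by (simp add: red_Cons)
qed

lemma free_eq_iff_red: "free_eq a b \<longleftrightarrow> red a = red b"
  using free_eq_red free_eq_to_red by (metis free_eq_sym free_eq_trans)

section \<open>Substitution\<close>

lemma subst_Nil[simp]: "subst_word f [] = []" by (simp add: subst_word_def)
lemma subst_Cons[simp]: "subst_word f (a # w) = (if snd a then inv_word (f (fst a)) else f (fst a)) @ subst_word f w"
  by (cases a) (simp add: subst_word_def)
lemma subst_append[simp]: "subst_word f (a @ b) = subst_word f a @ subst_word f b"
  by (simp add: subst_word_def)
lemma subst_inv[simp]: "subst_word f (inv_word a) = inv_word (subst_word f a)"
  by (induction a) (auto simp: inv1_def)
lemma subst_subst: "subst_word f (subst_word g w) = subst_word (\<lambda>z. subst_word f (g z)) w"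
  by (induction w) auto
lemma subst_id: "subst_word (\<lambda>z. [(z, False)]) w = w"
  by (induction w) (auto simp: inv1_def)

lemma free_step_subst: "free_step a b \<Longrightarrow> free_eq (subst_word f a) (subst_word f b)"
proof (induction rule: free_step.induct)
  case (1 u x e v)
  have "free_eq (subst_word f [(x, e), (x, \<not> e)]) []"
    by (cases e) (auto intro: free_eq_inv_left free_eq_inv_right)
  then have "free_eq (subst_word f u @ subst_word f [(x, e), (x, \<not> e)] @ subst_word f v)
                     (subst_word f u @ [] @ subst_word f v)" by (rule free_eq_cong)
  then show ?case by simp
qed

lemma free_eq_subst: "free_eq a b \<Longrightarrow> free_eq (subst_word f a) (subst_word f b)"
  unfolding free_eq_def
  by (rule equivclp_map[where f="subst_word f"]) (auto intro: free_step_subst[unfolded free_eq_def])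

lemma free_eq_subst_pt:
  "(\<And>z. z \<in> fst ` set w \<Longrightarrow> free_eq (f z) (g z)) \<Longrightarrow> free_eq (subst_word f w) (subst_word g w)"
proof (induction w)
  case Nil then show ?case by simp
next
  case (Cons a w)
  then show ?case by (auto intro!: free_eq_app free_eq_inv)
qed



section \<open>Structure of Theta\<close>

definition sw :: "nat \<Rightarrow> nat \<Rightarrow> nat" where
  "sw i k = (if k = i then Suc i else if k = Suc i then i else k)"

lemma sw_sw[simp]: "sw i (sw i k) = k" by (simp add: sw_def)

definition ysw :: "fvb_gen \<Rightarrow> nat \<Rightarrow> nat" where
  "ysw g j = (case g of Sig i \<Rightarrow> j | Rho i \<Rightarrow> sw i j)"

lemma ysw_ysw[simp]: "ysw g (ysw g j) = j" by (cases g) (simp_all add: ysw_def)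

definition yw :: "fgen word \<Rightarrow> bool" where
  "yw c \<longleftrightarrow> (\<forall>x\<in>set c. \<exists>j. fst x = Y j)"

lemma yw_Nil[simp]: "yw []" by (simp add: yw_def)
lemma yw_append[simp]: "yw (a @ b) \<longleftrightarrow> yw a \<and> yw b" by (auto simp: yw_def)
lemma yw_Cons[simp]: "yw (a # b) \<longleftrightarrow> (\<exists>j. fst a = Y j) \<and> yw b" by (auto simp: yw_def)
lemma yw_inv[simp]: "yw (inv_word a) \<longleftrightarrow> yw a" by (auto simp: yw_def inv_word_def)
lemma yw_gpow[simp]: "yw (gpow (Y j) k)" by (simp add: yw_def gpow_def)

lemma yw_subst: "(\<And>z. z \<in> fst ` set c \<Longrightarrow> yw (f z)) \<Longrightarrow> yw (subst_word f c)"
  by (induction c) auto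

lemma yw_w_eval[simp]: "yw (w_eval w i)"
  unfolding w_eval_def by (rule yw_subst) (auto split: f2_gen.splits)

lemma yw_a_word[simp]: "yw (a_word w m i)"
  by (simp add: a_word_def)

lemma subst_fix: "(\<And>z. z \<in> fst ` set c \<Longrightarrow> f z = [(z, False)]) \<Longrightarrow> subst_word f c = c"
  by (induction c) (auto simp: inv1_def)

lemma subst_gpow: "f y = [(y', False)] \<Longrightarrow> subst_word f (gpow y k) = gpow y' k"
  by (induction "if 0 \<le> k then nat k else nat (- k)" arbitrary: k)
     (auto simp: gpow_def inv1_def subst_word_def)

lemma gpow_neg: "gpow y (- k) = inv_word (gpow y k)"
  by (auto simp: gpow_def inv_word_def)

lemma theta_gen_Y[simp]: "theta_gen w m g (Y j) = [(Y (ysw g j), False)]"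
  by (cases g) (auto simp: theta_gen_def ysw_def sw_def)

definition gcoef :: "f2_gen word \<Rightarrow> (nat \<Rightarrow> int) \<Rightarrow> fvb_gen \<Rightarrow> nat \<Rightarrow> fgen word" where
  "gcoef w m g k = tl (theta_gen w m g (X k))"

lemma theta_gen_X: "theta_gen w m g (X k) = (X (sw (fvb_idx g) k), False) # gcoef w m g k"
  by (cases g) (auto simp: theta_gen_def gcoef_def sw_def fvb_idx_def)

lemma yw_gcoef[simp]: "yw (gcoef w m g k)"
  by (cases g) (auto simp: theta_gen_def gcoef_def)

lemma theta_apply_Cons'[simp]:
  "theta_apply w m (a # u) f = theta_apply w m u (subst_word (theta_gen w m (fst a)) f)"
  by (cases a) simp

lemma ta_comp: "theta_apply w m (u @ v) f = theta_apply w m v (theta_apply w m u f)"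
  by (induction u arbitrary: f) auto

lemma ta_Nil[simp]: "theta_apply w m u [] = []"
  by (induction u) auto

lemma ta_app: "theta_apply w m u (a @ b) = theta_apply w m u a @ theta_apply w m u b"
  by (induction u arbitrary: a b) auto

lemma ta_inv: "theta_apply w m u (inv_word a) = inv_word (theta_apply w m u a)"
  by (induction u arbitrary: a) auto

lemma ta_subst: "theta_apply w m u f = subst_word (\<lambda>z. theta_apply w m u [(z, False)]) f"
proof (induction f)
  case Nil then show ?case by simp
next
  case (Cons a f)
  have "theta_apply w m u (a # f) = theta_apply w m u [a] @ theta_apply w m u f"
    using ta_app[of w m u "[a]" f] by simp
  moreover have "theta_apply w m u [a] = (if snd a then inv_word (theta_apply w m u [(fst a, False)])
      else theta_apply w m u [(fst a, False)])"
  proof (cases a)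
    case (Pair z e)
    then show ?thesis
      using ta_inv[of w m u "[(z, False)]"] by (cases e) (auto simp: inv1_def)
  qed
  ultimately show ?case using Cons by simp
qed

lemma ta_free_eq: "free_eq a b \<Longrightarrow> free_eq (theta_apply w m u a) (theta_apply w m u b)"
  by (induction u arbitrary: a b) (auto intro: free_eq_subst)

fun xp :: "fvb_gen word \<Rightarrow> nat \<Rightarrow> nat" where
  "xp [] k = k"
| "xp (a # u) k = xp u (sw (fvb_idx (fst a)) k)"

fun yp :: "fvb_gen word \<Rightarrow> nat \<Rightarrow> nat" where
  "yp [] j = j"
| "yp (a # u) j = yp u (ysw (fst a) j)"

lemma ta_Y: "theta_apply w m u [(Y j, False)] = [(Y (yp u j), False)]"
  by (induction u arbitrary: j) auto

lemma yw_ta: "yw c \<Longrightarrow> yw (theta_apply w m u c)"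
  apply (subst ta_subst)
  apply (rule yw_subst)
  apply (auto simp: yw_def ta_Y)
  done

definition xc :: "f2_gen word \<Rightarrow> (nat \<Rightarrow> int) \<Rightarrow> fvb_gen word \<Rightarrow> nat \<Rightarrow> fgen word" where
  "xc w m u k = tl (theta_apply w m u [(X k, False)])"

lemma ta_X_ex: "\<exists>c. theta_apply w m u [(X k, False)] = (X (xp u k), False) # c \<and> yw c"
proof (induction u arbitrary: k)
  case Nil then show ?case by simp
next
  case (Cons a u)
  obtain c where c: "theta_apply w m u [(X (sw (fvb_idx (fst a)) k), False)] = (X (xp u (sw (fvb_idx (fst a)) k)), False) # c" "yw c"
    using Cons by blast
  have "theta_apply w m (a # u) [(X k, False)] =
      theta_apply w m u ([(X (sw (fvb_idx (fst a)) k), False)] @ gcoef w m (fst a) k)"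
    by (simp add: theta_gen_X)
  also have "\<dots> = (X (xp (a # u) k), False) # c @ theta_apply w m u (gcoef w m (fst a) k)"
    by (simp only: ta_app c) simp
  finally show ?case using c(2) yw_ta[of "gcoef w m (fst a) k"] by auto
qed

lemma ta_X: "theta_apply w m u [(X k, False)] = (X (xp u k), False) # xc w m u k"
  using ta_X_ex[of w m u k] by (auto simp: xc_def)

lemma yw_xc[simp]: "yw (xc w m u k)"
  using ta_X_ex[of w m u k] by (auto simp: xc_def)

lemma ta_fix_yw:
  assumes "\<And>j. free_eq (theta_apply w m u [(Y j, False)]) [(Y j, False)]" and "yw c"
  shows "free_eq (theta_apply w m u c) c"
proof -
  have "free_eq (subst_word (\<lambda>z. theta_apply w m u [(z, False)]) c) (subst_word (\<lambda>z. [(z, False)]) c)"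
    by (rule free_eq_subst_pt) (use assms in \<open>auto simp: yw_def\<close>)
  then show ?thesis by (simp add: subst_id flip: ta_subst)
qed

lemma gen_inv: "free_eq (subst_word (theta_gen w m g) (theta_gen w m g z)) [(z, False)]"
proof (cases g)
  case (Sig i)
  have fixy: "subst_word (theta_gen w m (Sig i)) c = c" if "yw c" for c
    by (rule subst_fix) (use that in \<open>auto simp: yw_def ysw_def\<close>)
  show ?thesis
  proof (cases "z = X i \<or> z = X (Suc i)")
    case True
    then show ?thesis
    proof
      assume z: "z = X i"
      have "subst_word (theta_gen w m g) (theta_gen w m g z) = (X i, False) # inv_word (a_word w m i) @ a_word w m i"
        using Sig z by (simp add: theta_gen_def fixy)
      then show ?thesis using z by (simp add: free_eq_Cons free_eq_inv_left)
    next
      assume z: "z = X (Suc i)"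
      have "subst_word (theta_gen w m g) (theta_gen w m g z) = (X (Suc i), False) # a_word w m i @ inv_word (a_word w m i)"
        using Sig z by (simp add: theta_gen_def fixy)
      then show ?thesis using z by (simp add: free_eq_Cons free_eq_inv_right)
    qed
  next
    case False
    then show ?thesis using Sig by (simp add: theta_gen_def)
  qed
next
  case (Rho i)
  show ?thesis
  proof (cases "z = X i \<or> z = X (Suc i)")
    case True
    then show ?thesis
    proof
      assume z: "z = X i"
      have "subst_word (theta_gen w m g) (theta_gen w m g z) = (X i, False) # gpow (Y i) (- m i) @ gpow (Y i) (m i)"
        using Rho z by (simp add: theta_gen_def subst_gpow)
      then show ?thesis using z by (simp add: free_eq_Cons free_eq_inv_left gpow_neg)
    next
      assume z: "z = X (Suc i)"
      have "subst_word (theta_gen w m g) (theta_gen w m g z) = (X (Suc i), False) # gpow (Y (Suc i)) (m i) @ gpow (Y (Suc i)) (- m i)"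
        using Rho z by (simp add: theta_gen_def subst_gpow)
      then show ?thesis using z by (simp add: free_eq_Cons free_eq_inv_right gpow_neg)
    qed
  next
    case False
    then show ?thesis using Rho by (cases z) (auto simp: theta_gen_def)
  qed
qed

lemma ta_rev: "free_eq (theta_apply w m (a @ rev a) f) f"
proof (induction a arbitrary: f)
  case Nil then show ?case by simp
next
  case (Cons x a)
  let ?G = "subst_word (theta_gen w m (fst x))"
  have "theta_apply w m ((x # a) @ rev (x # a)) f = ?G (theta_apply w m (a @ rev a) (?G f))"
    by (simp add: ta_comp)
  also have "free_eq \<dots> (?G (?G f))" by (rule free_eq_subst[OF Cons])
  also have "?G (?G f) = subst_word (\<lambda>z. ?G (theta_gen w m (fst x) z)) f" by (rule subst_subst)
  also have "free_eq \<dots> (subst_word (\<lambda>z. [(z, False)]) f)"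
    by (rule free_eq_subst_pt) (rule gen_inv)
  finally show ?case by (simp add: subst_id)
qed

lemma xp_app: "xp (u @ v) k = xp v (xp u k)" by (induction u arbitrary: k) auto
lemma xp_rev: "xp (a @ rev a) k = k"
  by (induction a arbitrary: k) (auto simp: xp_app)



definition pure_c :: "f2_gen word \<Rightarrow> (nat \<Rightarrow> int) \<Rightarrow> fvb_gen word \<Rightarrow> (nat \<Rightarrow> fgen word) \<Rightarrow> bool" where
  "pure_c w m u C \<longleftrightarrow> (\<forall>j. free_eq (theta_apply w m u [(Y j, False)]) [(Y j, False)])
     \<and> (\<forall>k. free_eq (theta_apply w m u [(X k, False)]) ((X k, False) # C k)) \<and> (\<forall>k. yw (C k))"

definition pure_s :: "f2_gen word \<Rightarrow> (nat \<Rightarrow> int) \<Rightarrow> fvb_gen word \<Rightarrow> nat set \<Rightarrow> bool" where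
  "pure_s w m u S \<longleftrightarrow> (\<exists>C. pure_c w m u C \<and> (\<forall>k. k \<notin> S \<longrightarrow> free_eq (C k) []))"

lemma pure_c_comp:
  assumes a: "pure_c w m a C" and b: "pure_c w m b D"
  shows "pure_c w m (a @ b) (\<lambda>k. D k @ C k)"
  unfolding pure_c_def
proof (intro conjI allI)
  fix j
  have "theta_apply w m (a @ b) [(Y j, False)] = theta_apply w m b (theta_apply w m a [(Y j, False)])"
    by (rule ta_comp)
  also have "free_eq \<dots> (theta_apply w m b [(Y j, False)])"
    using a by (auto simp: pure_c_def intro: ta_free_eq)
  also have "free_eq \<dots> [(Y j, False)]" using b by (auto simp: pure_c_def)
  finally show "free_eq (theta_apply w m (a @ b) [(Y j, False)]) [(Y j, False)]" .
next
  fix k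
  have "theta_apply w m (a @ b) [(X k, False)] = theta_apply w m b (theta_apply w m a [(X k, False)])"
    by (rule ta_comp)
  also have "free_eq \<dots> (theta_apply w m b ([(X k, False)] @ C k))"
    using a by (auto simp: pure_c_def intro: ta_free_eq)
  also have "\<dots> = theta_apply w m b [(X k, False)] @ theta_apply w m b (C k)" by (rule ta_app)
  also have "free_eq \<dots> (((X k, False) # D k) @ C k)"
    apply (rule free_eq_app)
    using a b by (auto simp: pure_c_def intro: ta_fix_yw)
  finally show "free_eq (theta_apply w m (a @ b) [(X k, False)]) ((X k, False) # D k @ C k)" by simp
next
  fix k show "yw (D k @ C k)" using a b by (auto simp: pure_c_def)
qed

lemma pure_c_rev:
  assumes a: "pure_c w m a C"
  shows "pure_c w m (rev a) (\<lambda>k. inv_word (C k))"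
proof -
  have Yr: "free_eq (theta_apply w m (rev a) [(Y j, False)]) [(Y j, False)]" for j
  proof -
    have "free_eq (theta_apply w m (rev a) [(Y j, False)]) (theta_apply w m (rev a) (theta_apply w m a [(Y j, False)]))"
      using a by (auto simp: pure_c_def intro: ta_free_eq free_eq_sym)
    also have "\<dots> = theta_apply w m (a @ rev a) [(Y j, False)]" by (simp add: ta_comp)
    also have "free_eq \<dots> [(Y j, False)]" by (rule ta_rev)
    finally show ?thesis .
  qed
  have Xr: "free_eq (theta_apply w m (rev a) [(X k, False)]) ((X k, False) # inv_word (C k))" for k
  proof -
    have "free_eq (theta_apply w m (rev a) [(X k, False)] @ C k) (theta_apply w m (rev a) [(X k, False)] @ theta_apply w m (rev a) (C k))"
      apply (rule free_eq_app[OF free_eq_refl])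
      apply (rule free_eq_sym, rule ta_fix_yw)
      using Yr a by (auto simp: pure_c_def)
    also have "\<dots> = theta_apply w m (rev a) ([(X k, False)] @ C k)" by (simp only: ta_app)
    also have "free_eq \<dots> (theta_apply w m (rev a) (theta_apply w m a [(X k, False)]))"
      using a by (auto simp: pure_c_def intro: ta_free_eq free_eq_sym)
    also have "\<dots> = theta_apply w m (a @ rev a) [(X k, False)]" by (simp add: ta_comp)
    also have "free_eq \<dots> [(X k, False)]" by (rule ta_rev)
    finally show ?thesis by (auto dest: free_eq_move)
  qed
  show ?thesis using Yr Xr a by (auto simp: pure_c_def)
qed

lemma free_eq_inv_Nil: "free_eq a [] \<Longrightarrow> free_eq (inv_word a) []"
  by (drule free_eq_inv) simp

lemma free_eq_drop_mid: "free_eq x [] \<Longrightarrow> free_eq (p @ x @ q) (p @ q)"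
  using free_eq_cong[of x "[]" p q] by simp

lemma pure_s_mono: "pure_s w m u S \<Longrightarrow> S \<subseteq> T \<Longrightarrow> pure_s w m u T"
  unfolding pure_s_def by blast

lemma pure_s_rev: "pure_s w m a S \<Longrightarrow> pure_s w m (rev a) S"
  unfolding pure_s_def
  apply (elim exE conjE)
  subgoal for C
    apply (rule exI[of _ "\<lambda>k. inv_word (C k)"])
    apply (auto intro: pure_c_rev free_eq_inv_Nil)
    done
  done

definition comm :: "'a list \<Rightarrow> 'a list \<Rightarrow> 'a list" where
  "comm a b = a @ b @ rev a @ rev b"

lemma pure_s_comm:
  assumes "pure_s w m a S" "pure_s w m b T"
  shows "pure_s w m (comm a b) (S \<inter> T)"
proof -
  obtain C where C: "pure_c w m a C" "\<And>k. k \<notin> S \<Longrightarrow> free_eq (C k) []" using assms(1) by (auto simp: pure_s_def)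
  obtain D where D: "pure_c w m b D" "\<And>k. k \<notin> T \<Longrightarrow> free_eq (D k) []" using assms(2) by (auto simp: pure_s_def)
  have "pure_c w m (((a @ b) @ rev a) @ rev b) (\<lambda>k. inv_word (D k) @ (inv_word (C k) @ (D k @ C k)))"
    by (intro pure_c_comp pure_c_rev C D)
  moreover have "free_eq (inv_word (D k) @ (inv_word (C k) @ (D k @ C k))) []" if "k \<notin> S \<inter> T" for k
  proof (cases "k \<in> S")
    case False
    have "free_eq (inv_word (D k) @ (inv_word (C k) @ (D k @ C k))) (inv_word (D k) @ (D k @ C k))"
      using free_eq_drop_mid[OF free_eq_inv_Nil[OF C(2)[OF False]], of "inv_word (D k)" "D k @ C k"] by simp
    also have "free_eq \<dots> ((inv_word (D k) @ D k) @ [])"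
      using free_eq_drop_mid[OF C(2)[OF False], of "inv_word (D k) @ D k" "[]"] by simp
    also have "free_eq \<dots> []" using free_eq_inv_left[of "D k"] by simp
    finally show ?thesis .
  next
    case True
    then have kT: "k \<notin> T" using that by auto
    have "free_eq (inv_word (D k) @ (inv_word (C k) @ (D k @ C k))) ([] @ (inv_word (C k) @ (D k @ C k)))"
      using free_eq_drop_mid[OF free_eq_inv_Nil[OF D(2)[OF kT]], of "[]" "inv_word (C k) @ (D k @ C k)"] by simp
    also have "free_eq \<dots> (inv_word (C k) @ C k)"
      using free_eq_drop_mid[OF D(2)[OF kT], of "inv_word (C k)" "C k"] by simp
    also have "free_eq \<dots> []" by (rule free_eq_inv_left)
    finally show ?thesis .
  qed
  ultimately show ?thesis unfolding pure_s_def comm_def by (intro exI[of _ "\<lambda>k. inv_word (D k) @ (inv_word (C k) @ (D k @ C k))"]) auto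
qed

lemma pure_s_conj:
  assumes "pure_s w m t S"
  shows "pure_s w m (g @ t @ rev g) {k. xp g k \<in> S}"
proof -
  obtain C where C: "pure_c w m t C" "\<And>k. k \<notin> S \<Longrightarrow> free_eq (C k) []" using assms by (auto simp: pure_s_def)
  have tY: "free_eq (theta_apply w m t [(Y j, False)]) [(Y j, False)]" for j using C by (auto simp: pure_c_def)
  have tX: "free_eq (theta_apply w m t [(X k, False)]) ((X k, False) # C k)" for k using C by (auto simp: pure_c_def)
  define E where "E k = xc w m (rev g) (xp g k) @ theta_apply w m (rev g) (C (xp g k)) @ theta_apply w m (rev g) (xc w m g k)" for k
  have Y: "free_eq (theta_apply w m (g @ t @ rev g) [(Y j, False)]) [(Y j, False)]" for j
  proof -
    have "theta_apply w m (g @ t @ rev g) [(Y j, False)] = theta_apply w m (rev g) (theta_apply w m t [(Y (yp g j), False)])"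
      by (simp only: ta_comp ta_Y[of w m g j])
    also have "free_eq \<dots> (theta_apply w m (rev g) [(Y (yp g j), False)])" by (rule ta_free_eq[OF tY])
    also have "\<dots> = theta_apply w m (g @ rev g) [(Y j, False)]" by (simp only: ta_comp ta_Y[of w m g j])
    also have "free_eq \<dots> [(Y j, False)]" by (rule ta_rev)
    finally show ?thesis .
  qed
  have X: "free_eq (theta_apply w m (g @ t @ rev g) [(X k, False)]) ((X k, False) # E k)" for k
  proof -
    let ?k = "xp g k" and ?c = "xc w m g k"
    have "theta_apply w m (g @ t @ rev g) [(X k, False)] = theta_apply w m (rev g) (theta_apply w m t ([(X ?k, False)] @ ?c))"
      by (simp only: ta_comp ta_X[of w m g k] append_Cons append_Nil)
    also have "\<dots> = theta_apply w m (rev g) (theta_apply w m t [(X ?k, False)] @ theta_apply w m t ?c)"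
      by (simp only: ta_app)
    also have "free_eq \<dots> (theta_apply w m (rev g) (((X ?k, False) # C ?k) @ ?c))"
      by (rule ta_free_eq, rule free_eq_app[OF tX], rule ta_fix_yw[OF tY]) simp
    also have "\<dots> = theta_apply w m (rev g) ([(X ?k, False)] @ (C ?k @ ?c))" by simp
    also have "\<dots> = (X k, False) # E k"
      unfolding ta_app ta_X E_def using xp_rev[of g k] by (simp add: xp_app)
    finally show ?thesis .
  qed
  have yE: "yw (E k)" for k using C by (auto simp: E_def pure_c_def intro: yw_ta)
  have supp: "free_eq (E k) []" if "xp g k \<notin> S" for k
  proof -
    have "free_eq (E k) (xc w m (rev g) (xp g k) @ theta_apply w m (rev g) (xc w m g k))"
      unfolding E_def by (rule free_eq_drop_mid) (simp add: ta_free_eq[OF C(2)[OF that], simplified])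
    moreover have "(X k, False) # xc w m (rev g) (xp g k) @ theta_apply w m (rev g) (xc w m g k) = theta_apply w m (g @ rev g) [(X k, False)]"
    proof -
      have "theta_apply w m (g @ rev g) [(X k, False)] = theta_apply w m (rev g) ([(X (xp g k), False)] @ xc w m g k)"
        by (simp only: ta_comp ta_X[of w m g k] append_Cons append_Nil)
      also have "\<dots> = (X k, False) # xc w m (rev g) (xp g k) @ theta_apply w m (rev g) (xc w m g k)"
        unfolding ta_app ta_X using xp_rev[of g k] by (simp add: xp_app)
      finally show ?thesis by simp
    qed
    moreover have "free_eq (theta_apply w m (g @ rev g) [(X k, False)]) [(X k, False)]" by (rule ta_rev)
    ultimately have h1: "free_eq (E k) (xc w m (rev g) (xp g k) @ theta_apply w m (rev g) (xc w m g k))"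
      and h2: "free_eq ((X k, False) # (xc w m (rev g) (xp g k) @ theta_apply w m (rev g) (xc w m g k))) ((X k, False) # [])"
      by simp_all
    have "free_eq (xc w m (rev g) (xp g k) @ theta_apply w m (rev g) (xc w m g k)) []"
      by (rule free_eq_Cons_cancel[OF h2])
    then show ?thesis using h1 by (rule free_eq_trans[rotated])
  qed
  show ?thesis unfolding pure_s_def pure_c_def
    apply (rule exI[of _ E])
    apply (intro conjI allI impI)
        apply (rule Y)
       apply (rule X)
      apply (rule yE)
     apply (rule supp)
    apply simp
    done
qed

lemma pure_s_kernel:
  assumes "pure_s w m u {}"
  shows "free_eq (theta_apply w m u [(z, False)]) [(z, False)]"
proof -
  obtain C where C: "pure_c w m u C" "\<And>k. free_eq (C k) []" using assms by (auto simp: pure_s_def)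
  show ?thesis
  proof (cases z)
    case (X k)
    have "free_eq (theta_apply w m u [(X k, False)]) ((X k, False) # C k)" using C by (auto simp: pure_c_def)
    also have "free_eq \<dots> [(X k, False)]" using free_eq_Cons[OF C(2)] by simp
    finally show ?thesis using X by simp
  next
    case (Y j) then show ?thesis using C by (auto simp: pure_c_def)
  qed
qed

lemma ta_X_fix: "(\<And>a. a \<in> set u \<Longrightarrow> k \<noteq> fvb_idx (fst a) \<and> k \<noteq> Suc (fvb_idx (fst a)))
   \<Longrightarrow> theta_apply w m u [(X k, False)] = [(X k, False)]"
proof (induction u)
  case Nil then show ?case by simp
next
  case (Cons a u)
  have "k \<noteq> fvb_idx (fst a) \<and> k \<noteq> Suc (fvb_idx (fst a))" using Cons.prems by auto
  then have "theta_gen w m (fst a) (X k) = [(X k, False)]"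
    by (cases "fst a") (auto simp: theta_gen_def fvb_idx_def)
  then show ?case using Cons by simp
qed



definition sg :: "nat \<Rightarrow> fvb_gen \<times> bool" where "sg i = (Sig i, False)"
definition rh :: "nat \<Rightarrow> fvb_gen \<times> bool" where "rh i = (Rho i, False)"

definition t12 :: "fvb_gen word" where "t12 = [sg 1, rh 1, sg 1, rh 1]"
definition t13 :: "fvb_gen word" where "t13 = [rh 2] @ t12 @ rev [rh 2]"
definition t23 :: "fvb_gen word" where "t23 = [rh 1] @ t13 @ rev [rh 1]"
definition h1 :: "fvb_gen word" where "h1 = comm t12 t13"
definition h3 :: "fvb_gen word" where "h3 = comm t13 t23"
definition uA :: "fvb_gen word" where "uA = comm h3 t12"
definition vB :: "fvb_gen word" where "vB = rev t13 @ comm h1 (rev t23) @ rev (rev t13)"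

lemma pure_t12: "pure_s w m t12 {1, 2}"
proof -
  have Y: "theta_apply w m t12 [(Y j, False)] = [(Y j, False)]" for j
    by (simp add: ta_Y t12_def sg_def rh_def ysw_def)
  have xp: "xp t12 k = k" for k by (simp add: t12_def sg_def rh_def fvb_idx_def)
  have X: "theta_apply w m t12 [(X k, False)] = (X k, False) # xc w m t12 k" for k
    using ta_X[of w m t12 k] xp by simp
  have S: "xc w m t12 k = []" if "k \<notin> {1, 2}" for k
    unfolding xc_def using that
    by (subst ta_X_fix) (auto simp: t12_def sg_def rh_def fvb_idx_def)
  show ?thesis unfolding pure_s_def pure_c_def
    apply (rule exI[of _ "xc w m t12"])
    using Y X S by auto
qed

lemma pure_t13: "pure_s w m t13 {1, 3}"
  unfolding t13_def
  by (rule pure_s_mono[OF pure_s_conj[OF pure_t12]]) (auto simp: rh_def fvb_idx_def sw_def)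

lemma pure_t23: "pure_s w m t23 {2, 3}"
  unfolding t23_def
  by (rule pure_s_mono[OF pure_s_conj[OF pure_t13]]) (auto simp: rh_def fvb_idx_def sw_def)

lemma pure_uA: "pure_s w m uA {}"
  unfolding uA_def h3_def
  by (rule pure_s_mono[OF pure_s_comm[OF pure_s_comm[OF pure_t13 pure_t23] pure_t12]]) auto

lemma pure_vB: "pure_s w m vB {}"
proof -
  have "pure_s w m (comm h1 (rev t23)) {}"
    unfolding h1_def
    by (rule pure_s_mono[OF pure_s_comm[OF pure_s_comm[OF pure_t12 pure_t13] pure_s_rev[OF pure_t23]]]) auto
  then show ?thesis unfolding vB_def
    by (rule pure_s_mono[OF pure_s_conj]) auto
qed



type_synonym tri = "nat \<times> nat \<times> nat"

definition sigc :: "nat \<Rightarrow> tri \<Rightarrow> f2_gen word" where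
  "sigc i p = (case p of (p1, p2, p3) \<Rightarrow>
     (if p1 = i \<and> p2 = Suc i then [(GA, False)] else if p1 = i \<and> p3 = Suc i then [(GB, False)]
      else if p2 = i \<and> p3 = Suc i then [(GA, False)] else if p2 = i \<and> p1 = Suc i then [(GA, True)]
      else if p3 = i \<and> p1 = Suc i then [(GB, True)] else if p3 = i \<and> p2 = Suc i then [(GA, True)] else []))"

definition pm :: "nat \<Rightarrow> tri \<Rightarrow> tri" where
  "pm i p = (case p of (p1, p2, p3) \<Rightarrow> (sw i p1, sw i p2, sw i p3))"

definition gc :: "fvb_gen \<Rightarrow> tri \<Rightarrow> f2_gen word" where
  "gc g p = (case g of Sig i \<Rightarrow> sigc i p | Rho i \<Rightarrow> [])"

fun finp :: "fvb_gen word \<Rightarrow> tri \<Rightarrow> tri" where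
  "finp [] p = p"
| "finp (a # w) p = finp w (pm (fvb_idx (fst a)) p)"

fun colL :: "fvb_gen word \<Rightarrow> tri \<Rightarrow> f2_gen word" where
  "colL [] p = []"
| "colL (a # w) p = colL w (pm (fvb_idx (fst a)) p) @ gc (fst a) p"

definition dist3 :: "tri \<Rightarrow> bool" where
  "dist3 p = (case p of (p1, p2, p3) \<Rightarrow> p1 \<noteq> p2 \<and> p1 \<noteq> p3 \<and> p2 \<noteq> p3)"

definition good :: "fvb_gen word \<Rightarrow> bool" where
  "good r \<longleftrightarrow> (\<forall>p. dist3 p \<longrightarrow> finp r p = p \<and> red (colL r p) = [])"

lemma good_sq: "good [(Sig i, e), (Sig i, e')]"
  unfolding good_def
  by (auto simp: dist3_def pm_def sw_def sigc_def gc_def fvb_idx_def red_def lmul_def inv1_def)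

lemma cls3: "x = i \<or> x = Suc i \<or> x = Suc (Suc i) \<or> (x \<noteq> i \<and> x \<noteq> Suc i \<and> x \<noteq> Suc (Suc i))"
  by auto

lemmas gsimps = gw_def inv1_def dist3_def pm_def sw_def sigc_def gc_def fvb_idx_def red_def lmul_def

lemma good_braid_s: "good (gw (Sig i) @ gw (Sig (i+1)) @ gw (Sig i) @ inv_word (gw (Sig (i+1)) @ gw (Sig i) @ gw (Sig (i+1))))"
  unfolding good_def
proof (intro allI impI)
  fix p :: tri assume d: "dist3 p"
  obtain p1 p2 p3 where p: "p = (p1, p2, p3)" by (cases p)
  show "finp (gw (Sig i) @ gw (Sig (i+1)) @ gw (Sig i) @ inv_word (gw (Sig (i+1)) @ gw (Sig i) @ gw (Sig (i+1)))) p = p \<and>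
    red (colL (gw (Sig i) @ gw (Sig (i+1)) @ gw (Sig i) @ inv_word (gw (Sig (i+1)) @ gw (Sig i) @ gw (Sig (i+1)))) p) = []"
    using cls3[of p1 i] cls3[of p2 i] cls3[of p3 i] d unfolding p
    by (elim disjE; simp add: gsimps)
qed


lemma cls5: "x = i \<or> x = Suc i \<or> x = j \<or> x = Suc j \<or> (x \<noteq> i \<and> x \<noteq> Suc i \<and> x \<noteq> j \<and> x \<noteq> Suc j)"
  by auto

lemma good_I:
  assumes "\<And>p1 p2 p3. dist3 (p1, p2, p3) \<Longrightarrow> finp r (p1, p2, p3) = (p1, p2, p3) \<and> red (colL r (p1, p2, p3)) = []"
  shows "good r"
  unfolding good_def using assms by auto

lemma good_sq_s: "good (gw (Sig i) @ gw (Sig i))"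
  by (rule good_I) (auto simp: gsimps)

lemma good_sq_r: "good (gw (Rho i) @ gw (Rho i))"
  by (rule good_I) (auto simp: gsimps)

lemma good_braid_r: "good (gw (Rho i) @ gw (Rho (i+1)) @ gw (Rho i) @ inv_word (gw (Rho (i+1)) @ gw (Rho i) @ gw (Rho (i+1))))"
proof (rule good_I)
  fix p1 p2 p3 assume d: "dist3 (p1, p2, p3)"
  show "finp (gw (Rho i) @ gw (Rho (i+1)) @ gw (Rho i) @ inv_word (gw (Rho (i+1)) @ gw (Rho i) @ gw (Rho (i+1)))) (p1, p2, p3) = (p1, p2, p3) \<and>
    red (colL (gw (Rho i) @ gw (Rho (i+1)) @ gw (Rho i) @ inv_word (gw (Rho (i+1)) @ gw (Rho i) @ gw (Rho (i+1)))) (p1, p2, p3)) = []"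
    using cls3[of p1 i] cls3[of p2 i] cls3[of p3 i] d
    by (elim disjE; simp add: gsimps)
qed

lemma good_mixed: "good (gw (Rho i) @ gw (Rho (i+1)) @ gw (Sig i) @ inv_word (gw (Sig (i+1)) @ gw (Rho i) @ gw (Rho (i+1))))"
proof (rule good_I)
  fix p1 p2 p3 assume d: "dist3 (p1, p2, p3)"
  show "finp (gw (Rho i) @ gw (Rho (i+1)) @ gw (Sig i) @ inv_word (gw (Sig (i+1)) @ gw (Rho i) @ gw (Rho (i+1)))) (p1, p2, p3) = (p1, p2, p3) \<and>
    red (colL (gw (Rho i) @ gw (Rho (i+1)) @ gw (Sig i) @ inv_word (gw (Sig (i+1)) @ gw (Rho i) @ gw (Rho (i+1)))) (p1, p2, p3)) = []"
    using cls3[of p1 i] cls3[of p2 i] cls3[of p3 i] d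
    by (elim disjE; simp add: gsimps)
qed



lemma good_comm_ss:
  assumes ne: "i \<noteq> j" "Suc i \<noteq> j" "i \<noteq> Suc j"
  shows "good (commutator_rel (Sig i) (Sig j))"
proof (rule good_I)
  have ne2: "j \<noteq> i" "j \<noteq> Suc i" "Suc j \<noteq> i" "Suc i \<noteq> Suc j" "Suc j \<noteq> Suc i" using ne by auto
  fix p1 p2 p3 assume d: "dist3 (p1, p2, p3)"
  show "finp (commutator_rel (Sig i) (Sig j)) (p1, p2, p3) = (p1, p2, p3) \<and> red (colL (commutator_rel (Sig i) (Sig j)) (p1, p2, p3)) = []"
    using cls5[of p1 i j] cls5[of p2 i j] cls5[of p3 i j] d
    apply (elim disjE)
    apply (simp_all add: gsimps commutator_rel_def ne ne2)
    done
qed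

lemma good_comm_rr:
  assumes ne: "i \<noteq> j" "Suc i \<noteq> j" "i \<noteq> Suc j"
  shows "good (commutator_rel (Rho i) (Rho j))"
proof (rule good_I)
  have ne2: "j \<noteq> i" "j \<noteq> Suc i" "Suc j \<noteq> i" "Suc i \<noteq> Suc j" "Suc j \<noteq> Suc i" using ne by auto
  fix p1 p2 p3 assume d: "dist3 (p1, p2, p3)"
  show "finp (commutator_rel (Rho i) (Rho j)) (p1, p2, p3) = (p1, p2, p3) \<and> red (colL (commutator_rel (Rho i) (Rho j)) (p1, p2, p3)) = []"
    using cls5[of p1 i j] cls5[of p2 i j] cls5[of p3 i j] d
    apply (elim disjE)
    apply (simp_all add: gsimps commutator_rel_def ne ne2)
    done
qed

lemma good_comm_rs:
  assumes ne: "i \<noteq> j" "Suc i \<noteq> j" "i \<noteq> Suc j"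
  shows "good (commutator_rel (Rho i) (Sig j))"
proof (rule good_I)
  have ne2: "j \<noteq> i" "j \<noteq> Suc i" "Suc j \<noteq> i" "Suc i \<noteq> Suc j" "Suc j \<noteq> Suc i" using ne by auto
  fix p1 p2 p3 assume d: "dist3 (p1, p2, p3)"
  show "finp (commutator_rel (Rho i) (Sig j)) (p1, p2, p3) = (p1, p2, p3) \<and> red (colL (commutator_rel (Rho i) (Sig j)) (p1, p2, p3)) = []"
    using cls5[of p1 i j] cls5[of p2 i j] cls5[of p3 i j] d
    apply (elim disjE)
    apply (simp_all add: gsimps commutator_rel_def ne ne2)
    done
qed

lemma good_rels: "r \<in> fvb_rels n \<Longrightarrow> good r"
  apply (unfold fvb_rels_def)
  apply (elim UnE)
         apply (clarify, rule good_sq_s)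
        apply (clarify, rule good_sq_r)
       apply (clarify, rule good_braid_s)
      apply (clarify, rule good_braid_r)
     apply (clarify, rule good_mixed)
    apply (clarify, rule good_comm_ss; auto)
   apply (clarify, rule good_comm_rr; auto)
  apply (clarify, rule good_comm_rs; auto)
  done



lemma good_sq_rho: "good [(Rho i, e), (Rho i, e')]"
  unfolding good_def by (auto simp: gsimps)

lemma finp_app: "finp (u @ v) p = finp v (finp u p)"
  by (induction u arbitrary: p) auto

lemma colL_app: "colL (u @ v) p = colL v (finp u p) @ colL u p"
  by (induction u arbitrary: p) auto

lemma dist3_pm: "dist3 p \<Longrightarrow> dist3 (pm i p)"
  by (cases p) (auto simp: dist3_def pm_def sw_def)

lemma dist3_finp: "dist3 p \<Longrightarrow> dist3 (finp u p)"
  by (induction u arbitrary: p) (simp_all add: dist3_pm)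

lemma colL_fst: "map fst w1 = map fst w2 \<Longrightarrow> colL w1 p = colL w2 p \<and> finp w1 p = finp w2 p"
proof (induction w1 arbitrary: w2 p)
  case Nil then show ?case by simp
next
  case (Cons a w1)
  then obtain b w2' where "w2 = b # w2'" "fst a = fst b" "map fst w1 = map fst w2'" by (cases w2) auto
  then show ?case using Cons.IH by auto
qed

lemma good_mid:
  assumes "good r" "dist3 p"
  shows "finp (u @ r @ v) p = finp (u @ v) p \<and> free_eq (colL (u @ r @ v) p) (colL (u @ v) p)"
proof -
  let ?p = "finp u p"
  have d: "dist3 ?p" using assms(2) by (rule dist3_finp)
  have fr: "finp r ?p = ?p \<and> red (colL r ?p) = []"
    using assms(1) d unfolding good_def by blast
  then have f: "finp r ?p = ?p" and c: "free_eq (colL r ?p) []"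
    by (simp_all add: free_eq_iff_red)
  show ?thesis
    using free_eq_drop_mid[OF c, of "colL v ?p" "colL u p"]
    by (simp add: finp_app colL_app f)
qed

lemma pres_step_inv:
  assumes "pres_step (fvb_rels n) a b" "dist3 p"
  shows "finp a p = finp b p \<and> free_eq (colL a p) (colL b p)"
  using assms(1)
proof cases
  case (1 u x e v)
  have "good [(x, e), (x, \<not> e)]" by (cases x) (auto intro: good_sq good_sq_rho)
  then show ?thesis using good_mid[OF _ assms(2)] 1 by blast
next
  case (2 r u v)
  then show ?thesis using good_mid[OF good_rels assms(2)] by blast
qed

lemma fvb_eq_inv:
  assumes "fvb_eq n a b" "dist3 p"
  shows "finp a p = finp b p \<and> free_eq (colL a p) (colL b p)"
  using assms(1) unfolding fvb_eq_def pres_eq_def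
proof (induction rule: equivclp_induct)
  case base then show ?case by simp
next
  case (step y z)
  have "finp y p = finp z p \<and> free_eq (colL y p) (colL z p)"
    using step.hyps(2)
  proof
    assume "pres_step (fvb_rels n) y z"
    then show ?thesis by (rule pres_step_inv[OF _ assms(2)])
  next
    assume "pres_step (fvb_rels n) z y"
    then show ?thesis using pres_step_inv[OF _ assms(2)] free_eq_sym by metis
  qed
  then show ?case using step.IH free_eq_trans by metis
qed

lemma reduced_append:
  "reduced x \<Longrightarrow> reduced y \<Longrightarrow> (x \<noteq> [] \<Longrightarrow> y \<noteq> [] \<Longrightarrow> hd y \<noteq> inv1 (last x)) \<Longrightarrow> reduced (x @ y)"
proof (induction x rule: reduced.induct)
  case (1 a b w)
  have r1: "reduced (b # w)" and r2: "b \<noteq> inv1 a" using "1.prems"(1) by simp_all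
  have "reduced ((b # w) @ y)"
    by (rule "1.IH"[OF r1 "1.prems"(2)]) (use "1.prems"(3) in simp)
  then show ?case using r2 by simp
next
  case ("2_1")
  then show ?case by simp
next
  case ("2_2" a)
  show ?case
  proof (cases y)
    case Nil then show ?thesis by simp
  next
    case (Cons c y')
    then show ?thesis using "2_2.prems" by simp
  qed
qed

definition blk :: "('a \<Rightarrow> ('b \<times> bool) list) \<Rightarrow> 'a \<times> bool \<Rightarrow> ('b \<times> bool) list" where
  "blk G a = (if snd a then inv_word (G (fst a)) else G (fst a))"

lemma subst_reduced:
  assumes bl: "\<And>a. reduced (blk G a) \<and> blk G a \<noteq> []"
    and jn: "\<And>a b. b \<noteq> inv1 a \<Longrightarrow> hd (blk G b) \<noteq> inv1 (last (blk G a))"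
  shows "reduced r \<Longrightarrow> reduced (subst_word G r) \<and> (r \<noteq> [] \<longrightarrow> subst_word G r \<noteq> [] \<and> hd (subst_word G r) = hd (blk G (hd r)))"
proof (induction r)
  case Nil then show ?case by simp
next
  case (Cons a r)
  have sa: "subst_word G (a # r) = blk G a @ subst_word G r" by (simp add: blk_def)
  show ?case
  proof (cases r)
    case Nil
    then show ?thesis using bl[of a] sa by simp
  next
    case (Cons b r')
    have rb: "b \<noteq> inv1 a" and rr: "reduced r" using Cons.prems \<open>r = b # r'\<close> by auto
    have ih: "reduced (subst_word G r)" "subst_word G r \<noteq> []" "hd (subst_word G r) = hd (blk G b)"
      using Cons.IH[OF rr] \<open>r = b # r'\<close> by auto
    have "reduced (blk G a @ subst_word G r)"
      by (rule reduced_append) (use bl[of a] ih jn[OF rb] in auto)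
    then show ?thesis using sa bl[of a] by (simp add: hd_append)
  qed
qed

definition p0 :: tri where "p0 = (1, 2, 3)"

lemma fin_uA: "finp uA p0 = p0" and fin_vB: "finp vB p0 = p0"
  and fin_ruA: "finp (rev uA) p0 = p0" and fin_rvB: "finp (rev vB) p0 = p0"
  by (simp_all add: p0_def uA_def vB_def h1_def h3_def comm_def t12_def t13_def t23_def sg_def rh_def gsimps)

lemma col_uA: "red (colL uA p0) = [(GA, True), (GA, True), (GB, True), (GB, True), (GA, True), (GA, True), (GB, False), (GB, False), (GA, False), (GA, False), (GB, True), (GB, True), (GA, False), (GA, False), (GB, False), (GB, False)]"
  by (simp add: p0_def uA_def vB_def h1_def h3_def comm_def t12_def t13_def t23_def sg_def rh_def gsimps)
lemma col_ruA: "red (colL (rev uA) p0) = inv_word [(GA, True), (GA, True), (GB, True), (GB, True), (GA, True), (GA, True), (GB, False), (GB, False), (GA, False), (GA, False), (GB, True), (GB, True), (GA, False), (GA, False), (GB, False), (GB, False)]"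
  by (simp add: p0_def uA_def vB_def h1_def h3_def comm_def t12_def t13_def t23_def sg_def rh_def gsimps)
lemma col_vB: "red (colL vB p0) = [(GA, False), (GA, False), (GB, False), (GB, False), (GA, True), (GA, True), (GB, True), (GB, True), (GA, True), (GA, True), (GB, False), (GB, False), (GA, False), (GA, False), (GB, True), (GB, True)]"
  by (simp add: p0_def uA_def vB_def h1_def h3_def comm_def t12_def t13_def t23_def sg_def rh_def gsimps)
lemma col_rvB: "red (colL (rev vB) p0) = inv_word [(GA, False), (GA, False), (GB, False), (GB, False), (GA, True), (GA, True), (GB, True), (GB, True), (GA, True), (GA, True), (GB, False), (GB, False), (GA, False), (GA, False), (GB, True), (GB, True)]"
  by (simp add: p0_def uA_def vB_def h1_def h3_def comm_def t12_def t13_def t23_def sg_def rh_def gsimps)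

definition GF :: "f2_gen \<Rightarrow> fvb_gen word" where
  "GF g = (case g of GA \<Rightarrow> uA | GB \<Rightarrow> vB)"

definition GT :: "f2_gen \<Rightarrow> f2_gen word" where
  "GT g = (case g of GA \<Rightarrow> inv_word [(GA, True), (GA, True), (GB, True), (GB, True), (GA, True), (GA, True), (GB, False), (GB, False), (GA, False), (GA, False), (GB, True), (GB, True), (GA, False), (GA, False), (GB, False), (GB, False)] | GB \<Rightarrow> inv_word [(GA, False), (GA, False), (GB, False), (GB, False), (GA, True), (GA, True), (GB, True), (GB, True), (GA, True), (GA, True), (GB, False), (GB, False), (GA, False), (GA, False), (GB, True), (GB, True)])"

lemma map_fst_inv_word: "map fst (inv_word u) = map fst (rev u)"
  by (induction u) (auto simp: inv1_def)

lemma col_inv: "colL (inv_word u) p = colL (rev u) p \<and> finp (inv_word u) p = finp (rev u) p"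
  by (rule colL_fst[OF map_fst_inv_word])

lemma blk_props: "finp (blk GF a) p0 = p0 \<and> free_eq (colL (blk GF a) p0) (inv_word (blk GT a))"
proof -
  obtain g e where a: "a = (g, e)" by (cases a)
  show ?thesis
    unfolding a free_eq_iff_red
    by (cases g; cases e) (simp_all add: blk_def GF_def GT_def col_inv fin_uA fin_vB fin_ruA fin_rvB
         col_uA col_ruA col_vB col_rvB, simp_all add: red_def lmul_def inv1_def)
qed

lemma col_subst: "finp (subst_word GF r) p0 = p0 \<and> free_eq (colL (subst_word GF r) p0) (inv_word (subst_word GT r))"
proof (induction r)
  case Nil then show ?case by simp
next
  case (Cons a r)
  have e1: "subst_word GF (a # r) = blk GF a @ subst_word GF r" by (simp add: blk_def)
  have e2: "subst_word GT (a # r) = blk GT a @ subst_word GT r" by (simp add: blk_def)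
  show ?case
    unfolding e1 e2 using blk_props[of a] Cons
    by (auto simp: finp_app colL_app intro: free_eq_app)
qed

lemma GT_blocks: "reduced (blk GT a) \<and> blk GT a \<noteq> []"
proof -
  obtain g e where a: "a = (g, e)" by (cases a)
  show ?thesis unfolding a by (cases g; cases e) (simp_all add: blk_def GT_def inv1_def)
qed

lemma GT_junction: "b \<noteq> inv1 a \<Longrightarrow> hd (blk GT b) \<noteq> inv1 (last (blk GT a))"
proof -
  obtain g e where a: "a = (g, e)" by (cases a)
  obtain h f where b: "b = (h, f)" by (cases b)
  show "b \<noteq> inv1 a \<Longrightarrow> hd (blk GT b) \<noteq> inv1 (last (blk GT a))"
    unfolding a b by (cases g; cases e; cases h; cases f) (simp_all add: blk_def GT_def inv1_def)
qed

lemma free_part: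
  assumes "\<not> free_eq r []"
  shows "\<not> fvb_eq n (subst_word GF r) []"
proof
  assume h: "fvb_eq n (subst_word GF r) []"
  have d: "dist3 p0" by (simp add: p0_def dist3_def)
  have "free_eq (colL (subst_word GF r) p0) []"
    using fvb_eq_inv[OF h d] by simp
  then have "free_eq (inv_word (subst_word GT r)) []"
    using col_subst[of r] by (meson free_eq_sym free_eq_trans)
  then have "free_eq (subst_word GT r) []"
    using free_eq_inv_Nil by fastforce
  moreover have "free_eq (subst_word GT (red r)) (subst_word GT r)"
    by (rule free_eq_subst) (rule free_eq_sym[OF free_eq_to_red])
  ultimately have z: "free_eq (subst_word GT (red r)) []" by (rule free_eq_trans[rotated])
  have "red r \<noteq> []" using assms free_eq_iff_red by fastforce
  moreover have "reduced (red r)" by (rule reduced_red)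
  ultimately have "reduced (subst_word GT (red r)) \<and> subst_word GT (red r) \<noteq> []"
    using subst_reduced[OF GT_blocks GT_junction] by blast
  then have "red (subst_word GT (red r)) \<noteq> []" by (simp add: red_reduced)
  then show False using z by (simp add: free_eq_iff_red)
qed

lemma letters_uA: "\<forall>x\<in>set uA. fst x \<in> {Sig 1, Rho 1, Rho 2}"
  by (simp add: uA_def h3_def comm_def t12_def t13_def t23_def sg_def rh_def)

lemma letters_vB: "\<forall>x\<in>set vB. fst x \<in> {Sig 1, Rho 1, Rho 2}"
  by (simp add: vB_def h1_def comm_def t12_def t13_def t23_def sg_def rh_def)

lemma fvb_word_I: "3 \<le> n \<Longrightarrow> \<forall>x\<in>set u. fst x \<in> {Sig 1, Rho 1, Rho 2} \<Longrightarrow> fvb_word n u"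
  unfolding fvb_word_def by (auto simp: fvb_idx_def)

lemma kernel_I: "pure_s w m u {} \<Longrightarrow> in_theta_kernel n w m u"
  unfolding in_theta_kernel_def using pure_s_kernel by blast

theorem mainTheorem10:
  fixes n :: nat and w :: "f2_gen word" and m :: "nat \<Rightarrow> int"
  assumes "n \<ge> 3"
  shows "kernel_contains_F2 n w m"
  unfolding kernel_contains_F2_def
proof (intro exI conjI allI impI)
  show "fvb_word n uA" by (rule fvb_word_I[OF assms letters_uA])
  show "fvb_word n vB" by (rule fvb_word_I[OF assms letters_vB])
  show "in_theta_kernel n w m uA" by (rule kernel_I[OF pure_uA])
  show "in_theta_kernel n w m vB" by (rule kernel_I[OF pure_vB])
  fix r :: "f2_gen word"
  assume "\<not> free_eq r []"
  then have "\<not> fvb_eq n (subst_word GF r) []" by (rule free_part)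
  moreover have "GF = (\<lambda>g. case g of GA \<Rightarrow> uA | GB \<Rightarrow> vB)" by (simp add: GF_def fun_eq_iff)
  ultimately show "\<not> fvb_eq n (subst_word (\<lambda>g. case g of GA \<Rightarrow> uA | GB \<Rightarrow> vB) r) []" by simp
qed


end
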